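(* For $\phi\in L^\infty$, the slant H-Toeplitz operator $V_\phi$ is self-adjoint if and only if $\phi=0$.
   Context: $L^2=L^2(\mathbb{T})$ with orthonormal basis $e_n(z)=z^n$, $n\in\mathbb{Z}$; $H^2$ is the closed span of $\{e_n\}_{n\ge0}$, $P:L^2\to H^2$ the orthogonal projection, $M_\phi$ multiplication by $\phi$. $W:L^2\to L^2$: $We_n=e_{n/2}$ for $n$ even, $0$ for $n$ odd. $K:H^2\to L^2$: $Ke_{2n}=e_n$, $Ke_{2n+1}=e_{-n-1}$ ($n\ge0$). The slant H-Toeplitz operator is $V_\phi=WPM_\phi K:H^2\to H^2$. *)

theory Defs
  imports "HOL-Analysis.Analysis"
begin

text \<open>Functions on the unit circle are given as functions phi :: complex => complex,
  evaluated at cis t, t in [0, 2 pi], with normalized arc-length measure.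
  L^2(T) is identified with l^2(Z) via the orthonormal basis e_n(z) = z^n:
  an element of L^2 is represented by its sequence of coefficients.\<close>

definition Linf :: "(complex \<Rightarrow> complex) \<Rightarrow> bool" where
  "Linf phi \<longleftrightarrow> phi \<in> borel_measurable borel \<and>
     (\<exists>C. AE t in lborel. t \<in> {0..2*pi} \<longrightarrow> norm (phi (cis t)) \<le> C)"

definition fourier :: "(complex \<Rightarrow> complex) \<Rightarrow> int \<Rightarrow> complex" where
  "fourier phi n = complex_of_real (1 / (2*pi)) *
     (LINT t:{0..2*pi}|lborel. phi (cis t) * cnj (cis t powi n))"

definition l2 :: "(int \<Rightarrow> complex) set" where
  "l2 = {f. (\<lambda>n. (cmod (f n))\<^sup>2) summable_on UNIV}"

definition H2 :: "(int \<Rightarrow> complex) set" where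
  "H2 = {f \<in> l2. \<forall>n<0. f n = 0}"

definition l2_inner :: "(int \<Rightarrow> complex) \<Rightarrow> (int \<Rightarrow> complex) \<Rightarrow> complex" where
  "l2_inner f g = (\<Sum>\<^sub>\<infinity>n. f n * cnj (g n))"

definition Mult :: "(complex \<Rightarrow> complex) \<Rightarrow> (int \<Rightarrow> complex) \<Rightarrow> (int \<Rightarrow> complex)" where
  "Mult phi f = (\<lambda>n. \<Sum>\<^sub>\<infinity>m. fourier phi (n - m) * f m)"

definition Proj :: "(int \<Rightarrow> complex) \<Rightarrow> (int \<Rightarrow> complex)" where
  "Proj f = (\<lambda>n. if n \<ge> 0 then f n else 0)"

text \<open>W e_n = e_(n/2) for n even, 0 for n odd.\<close>
definition Wop :: "(int \<Rightarrow> complex) \<Rightarrow> (int \<Rightarrow> complex)" where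
  "Wop f = (\<lambda>m. f (2 * m))"

text \<open>K e_(2n) = e_n, K e_(2n+1) = e_(-n-1) for n >= 0.\<close>
definition Kop :: "(int \<Rightarrow> complex) \<Rightarrow> (int \<Rightarrow> complex)" where
  "Kop f = (\<lambda>m. if m \<ge> 0 then f (2 * m) else f (- 2 * m - 1))"

definition slant_HT :: "(complex \<Rightarrow> complex) \<Rightarrow> (int \<Rightarrow> complex) \<Rightarrow> (int \<Rightarrow> complex)" where
  "slant_HT phi f = Wop (Proj (Mult phi (Kop f)))"

definition selfadjoint_on_H2 :: "((int \<Rightarrow> complex) \<Rightarrow> (int \<Rightarrow> complex)) \<Rightarrow> bool" where
  "selfadjoint_on_H2 T \<longleftrightarrow> (\<forall>f\<in>H2. \<forall>g\<in>H2. l2_inner (T f) g = l2_inner f (T g))"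

end

theory Submission
  imports Defs
begin
definition trig :: "(complex \<times> int) list \<Rightarrow> complex \<Rightarrow> complex" where
  "trig xs z = sum_list (map (\<lambda>(c,n). c * z powi n) xs)"

lemma trig_append: "trig (xs @ ys) z = trig xs z + trig ys z"
  by (simp add: trig_def)

lemma trig_prod:
  assumes "z \<noteq> 0"
  shows "trig (concat (map (\<lambda>(c,n). map (\<lambda>(d,m). (c*d, n+m)) ys) xs)) z = trig xs z * trig ys z"
proof (induction xs)
  case Nil then show ?case by (simp add: trig_def)
next
  case (Cons x xs)
  obtain c n where x: "x = (c,n)" by fastforce
  have "trig (map (\<lambda>(d,m). (c*d, n+m)) ys) z = c * z powi n * trig ys z"
    by (induction ys) (auto simp: trig_def power_int_add assms algebra_simps)
  then show ?case using Cons by (simp add: x trig_append[symmetric]) (simp add: trig_def algebra_simps)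
qed

lemma rpf_trig:
  assumes "real_polynomial_function (p :: complex \<Rightarrow> real)"
  shows "\<exists>xs. \<forall>z. norm z = 1 \<longrightarrow> complex_of_real (p z) = trig xs z"
  using assms
proof (induction p rule: real_polynomial_function.induct)
  case (linear f)
  have lin: "f z = Re z * f 1 + Im z * f \<i>" for z
  proof -
    have "z = Re z *\<^sub>R 1 + Im z *\<^sub>R \<i>" by (simp add: complex_eq_iff)
    then have "f z = f (Re z *\<^sub>R 1 + Im z *\<^sub>R \<i>)" by simp
    also have "\<dots> = Re z * f 1 + Im z * f \<i>"
      using linear_add[OF bounded_linear.linear[OF linear]] linear_scale[OF bounded_linear.linear[OF linear]] by simp
    finally show ?thesis .
  qed
  define xs where "xs = [((f 1 / 2 - \<i> * f \<i> / 2), 1), ((f 1 / 2 + \<i> * f \<i> / 2), -1::int)]"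
  have "complex_of_real (f z) = trig xs z" if "norm z = 1" for z
  proof -
    have z0: "z \<noteq> 0" using that by auto
    have inv: "inverse z = cnj z" using that
      by (metis complex_norm_square inverse_eq_divide mult.comm_neutral nonzero_mult_div_cancel_left norm_one of_real_1 one_power2 z0 complex_div_cnj)
    have re: "complex_of_real (Re z) = (z + cnj z) / 2" by (simp add: complex_add_cnj)
    have im: "complex_of_real (Im z) = (z - cnj z) / (2 * \<i>)" by (simp add: complex_diff_cnj field_simps)
    have "trig xs z = (f 1 / 2 - \<i> * f \<i> / 2) * z + (f 1 / 2 + \<i> * f \<i> / 2) * cnj z"
      by (simp add: xs_def trig_def power_int_minus inv)
    also have "\<dots> = f 1 * ((z + cnj z) / 2) + f \<i> * ((z - cnj z) / (2 * \<i>))"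
      by (simp add: field_simps)
    also have "\<dots> = complex_of_real (f z)" by (simp only: lin[of z] of_real_add of_real_mult re im) (simp add: algebra_simps)
    finally show ?thesis ..
  qed
  then show ?case by blast
next
  case (const c)
  then show ?case by (rule_tac x="[(complex_of_real c, 0)]" in exI) (simp add: trig_def)
next
  case (add f g)
  then obtain xs ys where "\<forall>z. norm z = 1 \<longrightarrow> complex_of_real (f z) = trig xs z"
      "\<forall>z. norm z = 1 \<longrightarrow> complex_of_real (g z) = trig ys z" by blast
  then show ?case by (rule_tac x="xs @ ys" in exI) (simp add: trig_append)
next
  case (mult f g)
  then obtain xs ys where X: "\<forall>z. norm z = 1 \<longrightarrow> complex_of_real (f z) = trig xs z"
      and Y: "\<forall>z. norm z = 1 \<longrightarrow> complex_of_real (g z) = trig ys z" by blast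
  have "complex_of_real (f z * g z) = trig (concat (map (\<lambda>(c,n). map (\<lambda>(d,m). (c*d, n+m)) ys) xs)) z"
    if "norm z = 1" for z
  proof -
    have "z \<noteq> 0" using that by auto
    then show ?thesis using X Y that trig_prod[of z ys xs] by simp
  qed
  then show ?case by blast
qed
lemma ind_int: "integrable lborel (h::real\<Rightarrow>real) \<Longrightarrow> A \<in> sets borel \<Longrightarrow> integrable lborel (\<lambda>x. indicator A x * h x)"
  using integrable_mult_indicator[of A lborel h] by simp

lemma ioi_zero:
  fixes g :: "real \<Rightarrow> real"
  assumes g: "integrable lborel g"
  and z: "\<And>x. (LINT t:{x<..}|lborel. g t) = 0"
  shows "AE t in lborel. g t = 0"
proof -
  define gp where "gp t = max (g t) 0" for t
  define gm where "gm t = max (- g t) 0" for t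
  have ip: "integrable lborel gp" and im: "integrable lborel gm"
    unfolding gp_def gm_def using g by auto
  have [measurable]: "gp \<in> borel_measurable borel" "gm \<in> borel_measurable borel"
    using ip im by (auto dest: borel_measurable_integrable)
  have eqi: "(LINT t:{x<..}|lborel. gp t) = (LINT t:{x<..}|lborel. gm t)" for x
  proof -
    have "(LINT t:{x<..}|lborel. gp t) - (LINT t:{x<..}|lborel. gm t) = (LINT t:{x<..}|lborel. gp t - gm t)"
      using ip im by (intro set_integral_diff(2)[symmetric]) (auto simp: set_integrable_def intro!: ind_int borel_open)
    also have "\<dots> = (LINT t:{x<..}|lborel. g t)"
      by (rule arg_cong[where f="set_lebesgue_integral lborel {x<..}"]) (auto simp: gp_def gm_def fun_eq_iff)
    finally show ?thesis using z by simp
  qed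
  have em: "emeasure (density lborel (\<lambda>t. ennreal (h t))) {x<..} = ennreal (LINT t:{x<..}|lborel. h t)"
    if "integrable lborel h" "\<And>t. h t \<ge> 0" for h :: "real \<Rightarrow> real" and x :: real
  proof -
    have [measurable]: "h \<in> borel_measurable borel" using that by (auto dest: borel_measurable_integrable)
    show ?thesis
      by (subst emeasure_density) (auto intro!: nn_set_integral_eq_set_integral that)
  qed
  have "density lborel (\<lambda>t. ennreal (gp t)) = density lborel (\<lambda>t. ennreal (gm t))"
  proof (rule measure_eqI_lessThan)
    fix x
    show "emeasure (density lborel (\<lambda>t. ennreal (gp t))) {x<..} < \<infinity>"
      using em[OF ip, of x] by (simp add: gp_def)
    show "emeasure (density lborel (\<lambda>t. ennreal (gp t))) {x<..} = emeasure (density lborel (\<lambda>t. ennreal (gm t))) {x<..}"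
      using em[OF ip, of x] em[OF im, of x] eqi[of x] by (simp add: gp_def gm_def)
  qed auto
  then have "AE t in lborel. ennreal (gp t) = ennreal (gm t)"
    by (intro sigma_finite_measure.density_unique[OF sigma_finite_lborel]) auto
  then show ?thesis
    by eventually_elim (auto simp: gp_def gm_def max_def split: if_splits)
qed
lemma int_cis:
  "(LINT t:{0..2*pi}|lborel. cis t powi n) = (if n = 0 then 2*pi else 0)"
proof -
  have ci: "set_integrable lborel {0..2*pi} (\<lambda>t. cis t powi n)"
    unfolding cis_power_int by (intro borel_integrable_atLeastAtMost') (intro continuous_intros)
  have e: "(LINT t:{0..2*pi}|lborel. cis t powi n) = integral {0..2*pi} (\<lambda>t. cis t powi n)"
    using set_borel_integral_eq_integral(2)[OF ci] .
  show ?thesis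
  proof (cases "n = 0")
    case True
    then show ?thesis unfolding e by (simp add: scaleR_conv_of_real)
  next
    case False
    have D: "((\<lambda>t. cis (of_int n * t) / (\<i> * of_int n)) has_vector_derivative cis t powi n) (at t within {0..2*pi})" for t
    proof -
      have "((\<lambda>t. cis (of_int n * t)) has_derivative (\<lambda>h. (of_int n * h) *\<^sub>R (\<i> * cis (of_int n * t)))) (at t within {0..2*pi})"
        by (intro has_derivative_cis has_derivative_mult_right has_derivative_ident)
      then have "((\<lambda>t. cis (of_int n * t) / (\<i> * of_int n)) has_derivative (\<lambda>h. ((of_int n * h) *\<^sub>R (\<i> * cis (of_int n * t))) / (\<i> * of_int n))) (at t within {0..2*pi})"
        by (rule bounded_linear.has_derivative[OF bounded_linear_divide])
      moreover have "(\<lambda>h. ((of_int n * h) *\<^sub>R (\<i> * cis (of_int n * t))) / (\<i> * of_int n)) = (\<lambda>h. h *\<^sub>R cis t powi n)"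
        using False by (auto simp: fun_eq_iff cis_power_int scaleR_conv_of_real field_simps)
      ultimately show ?thesis by (simp add: has_vector_derivative_def)
    qed
    have "((\<lambda>t. cis t powi n) has_integral (cis (of_int n * (2*pi)) / (\<i> * of_int n) - cis (of_int n * 0) / (\<i> * of_int n))) {0..2*pi}"
      by (rule fundamental_theorem_of_calculus) (auto intro: D)
    moreover have "cis (of_int n * (2*pi)) = 1"
      using cis_multiple_2pi[of "of_int n"] by (simp add: mult_ac)
    ultimately have "((\<lambda>t. cis t powi n) has_integral 0) {0..2*pi}" by simp
    then show ?thesis unfolding e using False by (simp add: integral_unique)
  qed
qed
definition ee :: "int \<Rightarrow> int \<Rightarrow> complex" where "ee j = (\<lambda>n. if n = j then 1 else 0)"

lemma infsum_single_int: "(\<And>n. n \<noteq> j \<Longrightarrow> f n = 0) \<Longrightarrow> (\<Sum>\<^sub>\<infinity>n. f n) = (f j :: complex)"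
proof -
  assume z: "\<And>n. n \<noteq> j \<Longrightarrow> f n = 0"
  have "(\<Sum>\<^sub>\<infinity>n. f n) = infsum f {j}"
    by (rule infsum_cong_neutral) (auto simp: z)
  then show ?thesis by simp
qed

lemma ee_H2: "j \<ge> 0 \<Longrightarrow> ee j \<in> H2"
proof -
  assume j: "j \<ge> 0"
  have "(\<lambda>n. (cmod (ee j n))\<^sup>2) summable_on UNIV \<longleftrightarrow> (\<lambda>n. (cmod (ee j n))\<^sup>2) summable_on {j}"
    by (rule summable_on_cong_neutral) (auto simp: ee_def)
  then show ?thesis using j unfolding H2_def l2_def by (auto simp: ee_def)
qed

lemma Kop_ee: "n \<ge> 0 \<Longrightarrow> Kop (ee (2*n)) = ee n"
  unfolding Kop_def ee_def by (auto simp: fun_eq_iff) presburger+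

lemma Mult_ee: "Mult phi (ee k) = (\<lambda>p. fourier phi (p - k))"
  unfolding Mult_def by (rule ext, subst infsum_single_int[of k]) (auto simp: ee_def)

lemma slant_ee: "n \<ge> 0 \<Longrightarrow> slant_HT phi (ee (2*n)) = (\<lambda>i. if i \<ge> 0 then fourier phi (2*i - n) else 0)"
  unfolding slant_HT_def by (simp add: Kop_ee Mult_ee Wop_def Proj_def fun_eq_iff)

lemma inner_ee_right: "l2_inner g (ee i) = g i"
  unfolding l2_inner_def by (subst infsum_single_int[of i]) (auto simp: ee_def)

lemma inner_ee_left: "l2_inner (ee j) g = cnj (g j)"
  unfolding l2_inner_def by (subst infsum_single_int[of j]) (auto simp: ee_def)

lemma SA_rel:
  assumes "selfadjoint_on_H2 (slant_HT phi)" "m \<ge> 0" "n \<ge> 0"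
  shows "fourier phi (4*m - n) = cnj (fourier phi (4*n - m))"
proof -
  have "l2_inner (slant_HT phi (ee (2*n))) (ee (2*m)) = l2_inner (ee (2*n)) (slant_HT phi (ee (2*m)))"
    using assms ee_H2[of "2*n"] ee_H2[of "2*m"] unfolding selfadjoint_on_H2_def by auto
  then show ?thesis
    using assms by (simp add: inner_ee_left inner_ee_right slant_ee)
qed

lemma norm_rel:
  assumes "selfadjoint_on_H2 (slant_HT phi)" "m \<ge> 0" "4*m \<ge> x"
  shows "norm (fourier phi (15*m - 4*x)) = norm (fourier phi x)"
proof -
  have "fourier phi (4*m - (4*m - x)) = cnj (fourier phi (4*(4*m - x) - m))"
    using SA_rel[OF assms(1), of m "4*m - x"] assms by simp
  moreover have "4*(4*m - x) - m = 15*m - 4*x" by simp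
  ultimately show ?thesis by simp
qed

definition NN :: "real measure" where "NN = restrict_space lborel {0..2*pi}"

lemma space_NN: "space NN = {0..2*pi}"
  by (simp add: NN_def space_restrict_space)

lemma fin_NN: "finite_measure NN"
  unfolding NN_def by (rule finite_measureI) (simp add: space_restrict_space emeasure_restrict_space)

lemma measure_NN: "measure NN (space NN) = 2*pi"
  unfolding NN_def by (simp add: space_restrict_space measure_restrict_space)

lemma LINT_NN: "(LINT t:{0..2*pi}|lborel. h t) = integral\<^sup>L NN (h :: real \<Rightarrow> complex)"
  unfolding NN_def set_lebesgue_integral_def by (subst integral_restrict_space) auto

lemma AE_NN: "(AE t in NN. P t) \<longleftrightarrow> (AE t in lborel. t \<in> {0..2*pi} \<longrightarrow> P t)"
  unfolding NN_def by (subst AE_restrict_space_iff) auto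

definition BM :: "(real \<Rightarrow> complex) \<Rightarrow> bool" where
  "BM g \<longleftrightarrow> g \<in> borel_measurable borel \<and> (\<exists>B. AE t in NN. norm (g t) \<le> B)"

lemma BM_meas_NN: "g \<in> borel_measurable borel \<Longrightarrow> g \<in> borel_measurable NN"
  unfolding NN_def by (rule measurable_restrict_space1) simp

lemma BM_int: "BM g \<Longrightarrow> integrable NN g"
  unfolding BM_def using finite_measure.integrable_const_bound[OF fin_NN] BM_meas_NN by blast

lemma BM_add: "BM f \<Longrightarrow> BM g \<Longrightarrow> BM (\<lambda>t. f t + g t)"
proof -
  assume "BM f" "BM g"
  then obtain A B where a: "AE t in NN. norm (f t) \<le> A" and b: "AE t in NN. norm (g t) \<le> B"
    and m: "f \<in> borel_measurable borel" "g \<in> borel_measurable borel" unfolding BM_def by blast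
  from a b have "AE t in NN. norm (f t + g t) \<le> A + B"
    by eventually_elim (meson add_mono norm_triangle_ineq order_trans)
  then show ?thesis using m unfolding BM_def by auto
qed

lemma BM_diff: "BM f \<Longrightarrow> BM g \<Longrightarrow> BM (\<lambda>t. f t - g t)"
proof -
  assume "BM f" "BM g"
  then obtain A B where a: "AE t in NN. norm (f t) \<le> A" and b: "AE t in NN. norm (g t) \<le> B"
    and m: "f \<in> borel_measurable borel" "g \<in> borel_measurable borel" unfolding BM_def by blast
  from a b have "AE t in NN. norm (f t - g t) \<le> A + B"
    by eventually_elim (meson add_mono norm_triangle_ineq4 order_trans)
  then show ?thesis using m unfolding BM_def by auto
qed

lemma BM_mult: "BM f \<Longrightarrow> BM g \<Longrightarrow> BM (\<lambda>t. f t * g t)"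
proof -
  assume "BM f" "BM g"
  then obtain A B where a: "AE t in NN. norm (f t) \<le> A" and b: "AE t in NN. norm (g t) \<le> B"
    and m: "f \<in> borel_measurable borel" "g \<in> borel_measurable borel" unfolding BM_def by blast
  from a b have "AE t in NN. norm (f t * g t) \<le> A * B"
  proof eventually_elim
    case (elim t)
    then show ?case by (simp add: norm_mult mult_mono')
  qed
  then show ?thesis using m unfolding BM_def by auto
qed

lemma BM_cnj: "BM f \<Longrightarrow> BM (\<lambda>t. cnj (f t))"
  unfolding BM_def
  by (auto intro: measurable_compose[OF _ borel_measurable_continuous_onI[OF continuous_on_cnj[OF continuous_on_id]]])

lemma BM_const: "BM (\<lambda>t. c)"
  unfolding BM_def by auto

lemma BM_sum: "(\<And>i. i \<in> S \<Longrightarrow> BM (f i)) \<Longrightarrow> BM (\<lambda>t. \<Sum>i\<in>S. f i t)"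
proof (induction S rule: infinite_finite_induct)
  case (infinite S) then show ?case by (simp add: BM_const)
next
  case empty then show ?case by (simp add: BM_const)
next
  case (insert x F) then show ?case by (simp add: BM_add)
qed

lemma BM_cispow: "BM (\<lambda>t. cis t powi n)"
  unfolding BM_def
  by (auto simp: norm_power_int intro!: borel_measurable_continuous_onI continuous_intros
      simp del: cis_power_int)
lemma int_NN_cis: "integral\<^sup>L NN (\<lambda>t. cis t powi n) = (if n = 0 then 2*pi else 0)"
  using int_cis[of n] by (simp add: LINT_NN)

lemma cnj_cispow: "cnj (cis t powi n) = cis t powi (-n)"
  by (simp add: cis_power_int cis_cnj)

lemma cnj_cispow2: "cnj (cis t) powi n = cis t powi (-n)"
  by (simp add: cis_power_int cis_cnj)

lemma mcnj: "complex_of_real ((cmod z)\<^sup>2) = z * cnj z"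
  using complex_norm_square by blast

lemma cis_ne0: "cis t \<noteq> 0"
  by (metis cis_neq_zero)

context
  fixes phi :: "complex \<Rightarrow> complex"
  assumes L: "Linf phi"
begin

lemma BM_phi: "BM (\<lambda>t. phi (cis t))"
proof -
  from L obtain C where m: "phi \<in> borel_measurable borel"
    and C: "AE t in lborel. t \<in> {0..2*pi} \<longrightarrow> norm (phi (cis t)) \<le> C"
    unfolding Linf_def by blast
  have "(\<lambda>t. phi (cis t)) \<in> borel_measurable borel"
    by (rule measurable_compose[OF borel_measurable_continuous_onI m]) (intro continuous_intros)
  then show ?thesis unfolding BM_def AE_NN using C by blast
qed

lemma bound_phi: obtains C where "C \<ge> 0" "AE t in NN. norm (phi (cis t)) \<le> C"
proof -
  from BM_phi obtain B where "AE t in NN. norm (phi (cis t)) \<le> B" unfolding BM_def by blast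
  then have "AE t in NN. norm (phi (cis t)) \<le> max B 0" by eventually_elim auto
  then show ?thesis using that[of "max B 0"] by auto
qed

lemma fourier_NN: "integral\<^sup>L NN (\<lambda>t. phi (cis t) * cis t powi n) = 2*pi * fourier phi (-n)"
  unfolding fourier_def LINT_NN cnj_cispow by simp

lemma bessel:
  assumes S: "finite S" and C: "AE t in NN. norm (phi (cis t)) \<le> C"
  shows "(\<Sum>n\<in>S. (cmod (fourier phi n))\<^sup>2) \<le> C\<^sup>2"
proof -
  define a where "a = fourier phi"
  define f where "f t = phi (cis t)" for t
  define P where "P t = (\<Sum>n\<in>S. a n * cis t powi n)" for t
  define \<Sigma> where "\<Sigma> = (\<Sum>n\<in>S. (cmod (a n))\<^sup>2)"
  have Bf: "BM f" using BM_phi unfolding f_def .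
  have BP: "BM P" unfolding P_def by (intro BM_sum BM_mult BM_const BM_cispow)
  have I1: "integral\<^sup>L NN (\<lambda>t. f t * cnj (P t)) = complex_of_real (2 * pi * \<Sigma>)"
  proof -
    have "(\<lambda>t. f t * cnj (P t)) = (\<lambda>t. \<Sum>n\<in>S. cnj (a n) * (f t * cis t powi (-n)))"
      by (auto simp: P_def fun_eq_iff sum_distrib_left cnj_cispow2 mult_ac)
    then have "integral\<^sup>L NN (\<lambda>t. f t * cnj (P t)) = (\<Sum>n\<in>S. cnj (a n) * integral\<^sup>L NN (\<lambda>t. f t * cis t powi (-n)))"
      by (simp add: Bochner_Integration.integral_sum BM_int BM_mult Bf BM_cispow BM_const)
    also have "\<dots> = (\<Sum>n\<in>S. complex_of_real (2 * pi * (cmod (a n))\<^sup>2))"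
      unfolding f_def fourier_NN a_def
      by (intro sum.cong refl) (simp only: mcnj of_real_mult, simp add: mult_ac)
    finally show ?thesis by (simp add: \<Sigma>_def sum_distrib_left del: of_real_mult)
  qed
  have I2: "integral\<^sup>L NN (\<lambda>t. P t * cnj (P t)) = complex_of_real (2 * pi * \<Sigma>)"
  proof -
    have "(\<lambda>t. P t * cnj (P t)) = (\<lambda>t. \<Sum>n\<in>S. \<Sum>m\<in>S. a n * cnj (a m) * cis t powi (n - m))"
    proof
      fix t
      have "P t * cnj (P t) = (\<Sum>n\<in>S. \<Sum>m\<in>S. (a n * cis t powi n) * (cnj (a m) * cis t powi (-m)))"
        by (simp add: P_def sum_product cnj_cispow2)
      also have "\<dots> = (\<Sum>n\<in>S. \<Sum>m\<in>S. a n * cnj (a m) * cis t powi (n - m))"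
        by (intro sum.cong refl) (simp add: power_int_diff cis_ne0 power_int_minus field_simps)
      finally show "P t * cnj (P t) = (\<Sum>n\<in>S. \<Sum>m\<in>S. a n * cnj (a m) * cis t powi (n - m))" .
    qed
    then have "integral\<^sup>L NN (\<lambda>t. P t * cnj (P t)) = (\<Sum>n\<in>S. \<Sum>m\<in>S. a n * cnj (a m) * integral\<^sup>L NN (\<lambda>t. cis t powi (n - m)))"
      by (simp add: Bochner_Integration.integral_sum BM_int BM_mult BM_sum BM_cispow BM_const)
    also have "\<dots> = (\<Sum>n\<in>S. complex_of_real (2 * pi * (cmod (a n))\<^sup>2))"
      unfolding int_NN_cis
    proof (intro sum.cong refl)
      fix n assume "n \<in> S"
      have "(\<Sum>m\<in>S. a n * cnj (a m) * complex_of_real (if n - m = 0 then 2 * pi else 0)) =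
            (\<Sum>m\<in>S. if n = m then a n * cnj (a m) * complex_of_real (2 * pi) else 0)"
        by (intro sum.cong refl) auto
      also have "\<dots> = a n * cnj (a n) * complex_of_real (2 * pi)"
        using sum.delta'[OF S, of n "\<lambda>m. a n * cnj (a m) * complex_of_real (2 * pi)"] \<open>n \<in> S\<close> by simp
      also have "\<dots> = complex_of_real (2 * pi * (cmod (a n))\<^sup>2)"
        by (simp only: mcnj of_real_mult, simp add: mult_ac)
      finally show "(\<Sum>m\<in>S. a n * cnj (a m) * complex_of_real (if n - m = 0 then 2 * pi else 0)) = complex_of_real (2 * pi * (cmod (a n))\<^sup>2)" .
    qed
    finally show ?thesis by (simp add: \<Sigma>_def sum_distrib_left del: of_real_mult)
  qed
  have Bfmp: "BM (\<lambda>t. (f t - P t) * cnj (f t - P t))" by (intro BM_mult BM_cnj BM_diff Bf BP)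
  have cj: "integral\<^sup>L NN (\<lambda>t. cnj (f t) * P t) = cnj (integral\<^sup>L NN (\<lambda>t. f t * cnj (P t)))"
  proof -
    have "(\<lambda>t. cnj (f t) * P t) = (\<lambda>t. cnj (f t * cnj (P t)))" by (simp add: fun_eq_iff mult_ac)
    then show ?thesis using Bochner_Integration.integral_cnj[of NN "\<lambda>t. f t * cnj (P t)"] by simp
  qed
  have "(\<lambda>t. (f t - P t) * cnj (f t - P t)) = (\<lambda>t. (f t * cnj (f t) - f t * cnj (P t)) - (cnj (f t * cnj (P t)) - P t * cnj (P t)))"
    by (auto simp: fun_eq_iff algebra_simps)
  then have "integral\<^sup>L NN (\<lambda>t. (f t - P t) * cnj (f t - P t)) =
     (integral\<^sup>L NN (\<lambda>t. f t * cnj (f t)) - integral\<^sup>L NN (\<lambda>t. f t * cnj (P t))) - (cnj (integral\<^sup>L NN (\<lambda>t. f t * cnj (P t))) - integral\<^sup>L NN (\<lambda>t. P t * cnj (P t)))"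
    by (simp add: BM_int BM_mult BM_cnj BM_diff Bf BP cj)
  then have E: "integral\<^sup>L NN (\<lambda>t. (f t - P t) * cnj (f t - P t)) = integral\<^sup>L NN (\<lambda>t. f t * cnj (f t)) - 2 * pi * \<Sigma>"
    unfolding I1 I2 by simp
  have "0 \<le> integral\<^sup>L NN (\<lambda>t. Re ((f t - P t) * cnj (f t - P t)))"
    by (intro integral_nonneg_AE AE_I2) (metis mcnj Re_complex_of_real zero_le_power2)
  also have "\<dots> = Re (integral\<^sup>L NN (\<lambda>t. f t * cnj (f t))) - 2 * pi * \<Sigma>"
    by (simp only: integral_Re[OF BM_int[OF Bfmp]] E) simp
  finally have 1: "2 * pi * \<Sigma> \<le> Re (integral\<^sup>L NN (\<lambda>t. f t * cnj (f t)))" by simp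
  have "Re (integral\<^sup>L NN (\<lambda>t. f t * cnj (f t))) = integral\<^sup>L NN (\<lambda>t. Re (f t * cnj (f t)))"
    by (rule integral_Re[OF BM_int[OF BM_mult[OF Bf BM_cnj[OF Bf]]], symmetric])
  also have "\<dots> \<le> integral\<^sup>L NN (\<lambda>t. C\<^sup>2)"
  proof (rule integral_mono_AE)
    show "integrable NN (\<lambda>t. Re (f t * cnj (f t)))"
      by (rule integrable_Re[OF BM_int[OF BM_mult[OF Bf BM_cnj[OF Bf]]]])
    show "integrable NN (\<lambda>t. C\<^sup>2)" using finite_measure.integrable_const[OF fin_NN] .
    show "AE t in NN. Re (f t * cnj (f t)) \<le> C\<^sup>2"
      using C
    proof eventually_elim
      case (elim t)
      then have "(cmod (f t))\<^sup>2 \<le> C\<^sup>2" unfolding f_def by (meson norm_ge_zero power_mono)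
      then show ?case by (simp add: complex_mult_cnj cmod_power2)
    qed
  qed
  also have "\<dots> = 2 * pi * C\<^sup>2" using measure_NN by simp
  finally have "2 * pi * (\<Sum>n\<in>S. (cmod (fourier phi n))\<^sup>2) \<le> 2 * pi * C\<^sup>2" using 1 unfolding \<Sigma>_def a_def by linarith
  then show ?thesis using pi_gt_zero by simp
qed


lemma BM_trig: "BM (\<lambda>t. trig xs (cis t))"
proof (induction xs)
  case Nil then show ?case by (simp add: trig_def BM_const)
next
  case (Cons x xs)
  obtain c n where x: "x = (c, n)" by fastforce
  have "BM (\<lambda>t. c * cis t powi n + trig xs (cis t))"
    by (intro BM_add BM_mult BM_const BM_cispow Cons)
  then show ?case by (simp add: x trig_def)
qed

lemma trig_int:
  "integral\<^sup>L NN (\<lambda>t. phi (cis t) * trig xs (cis t)) = sum_list (map (\<lambda>(c,n). c * (2*pi * fourier phi (-n))) xs)"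
proof (induction xs)
  case Nil then show ?case by (simp add: trig_def)
next
  case (Cons x xs)
  obtain c n where x: "x = (c, n)" by fastforce
  have e: "(\<lambda>t. phi (cis t) * trig (x # xs) (cis t)) = (\<lambda>t. c * (phi (cis t) * cis t powi n) + phi (cis t) * trig xs (cis t))"
    by (simp add: x trig_def fun_eq_iff algebra_simps)
  have "integral\<^sup>L NN (\<lambda>t. c * (phi (cis t) * cis t powi n) + phi (cis t) * trig xs (cis t)) =
        c * integral\<^sup>L NN (\<lambda>t. phi (cis t) * cis t powi n) + integral\<^sup>L NN (\<lambda>t. phi (cis t) * trig xs (cis t))"
    by (subst Bochner_Integration.integral_add) (auto intro!: BM_int BM_mult BM_const BM_cispow BM_phi BM_trig)
  then show ?case unfolding e using Cons by (simp add: x fourier_NN)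
qed

context
  assumes Z: "\<And>n. fourier phi n = 0"
begin

lemma poly_zero:
  assumes "real_polynomial_function p"
  shows "integral\<^sup>L NN (\<lambda>t. phi (cis t) * trig xs (cis t)) = 0"
  unfolding trig_int Z by (induction xs) auto

lemma cont_zero:
  assumes h: "continuous_on (sphere 0 1) (h :: complex \<Rightarrow> real)"
  shows "integral\<^sup>L NN (\<lambda>t. phi (cis t) * complex_of_real (h (cis t))) = 0"
proof -
  obtain C where C0: "C \<ge> 0" and C: "AE t in NN. norm (phi (cis t)) \<le> C" using bound_phi by blast
  have cs: "cis t \<in> sphere 0 1" for t by simp
  have hc: "continuous_on UNIV (\<lambda>t. h (cis t))"
    by (rule continuous_on_compose2[OF h]) (auto intro: continuous_intros)
  obtain B where B0: "\<forall>x\<in>h ` sphere 0 1. norm x \<le> B"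
    using compact_imp_bounded[OF compact_continuous_image[OF h compact_sphere]]
    unfolding bounded_iff by blast
  have B: "\<And>z. z \<in> sphere 0 1 \<Longrightarrow> norm (h z) \<le> B" using B0 by blast
  have Bh: "BM (\<lambda>t. complex_of_real (h (cis t)))"
    unfolding BM_def using B[OF cs]
    by (auto intro!: borel_measurable_continuous_onI continuous_intros hc)
  define I where "I = integral\<^sup>L NN (\<lambda>t. phi (cis t) * complex_of_real (h (cis t)))"
  have "norm I \<le> 0 + e" if e: "e > 0" for e
  proof -
    define d where "d = e / (C * (2*pi) + 1)"
    have cp: "C * (2*pi) + 1 > 0" using C0 by (simp add: add_nonneg_pos)
    have d: "d > 0" unfolding d_def using e cp by simp
    obtain p where p: "polynomial_function p" and pa: "\<forall>z\<in>sphere 0 1. norm (h z - p z) < d"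
      using Stone_Weierstrass_polynomial_function[OF compact_sphere h d] by blast
    obtain xs where xs: "\<And>z. norm z = 1 \<Longrightarrow> complex_of_real (p z) = trig xs z"
      using rpf_trig[of p] p real_polynomial_function_eq by blast
    have "I = integral\<^sup>L NN (\<lambda>t. phi (cis t) * complex_of_real (h (cis t))) - integral\<^sup>L NN (\<lambda>t. phi (cis t) * trig xs (cis t))"
      unfolding I_def poly_zero[OF p[folded real_polynomial_function_eq]] by simp
    also have "\<dots> = integral\<^sup>L NN (\<lambda>t. phi (cis t) * complex_of_real (h (cis t)) - phi (cis t) * trig xs (cis t))"
      by (rule Bochner_Integration.integral_diff[symmetric]) (intro BM_int BM_mult BM_phi BM_trig Bh)+
    also have "(\<lambda>t. phi (cis t) * complex_of_real (h (cis t)) - phi (cis t) * trig xs (cis t)) =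
        (\<lambda>t. phi (cis t) * (complex_of_real (h (cis t)) - trig xs (cis t)))"
      by (simp add: fun_eq_iff right_diff_distrib)
    finally have "norm I \<le> integral\<^sup>L NN (\<lambda>t. norm (phi (cis t) * (complex_of_real (h (cis t)) - trig xs (cis t))))"
      by simp
    also have "\<dots> \<le> integral\<^sup>L NN (\<lambda>t. C * d)"
    proof (rule integral_mono_AE)
      show "integrable NN (\<lambda>t. norm (phi (cis t) * (complex_of_real (h (cis t)) - trig xs (cis t))))"
        by (intro integrable_norm BM_int BM_mult BM_phi BM_diff Bh BM_trig)
      show "integrable NN (\<lambda>t. C * d)" using finite_measure.integrable_const[OF fin_NN] .
      show "AE t in NN. norm (phi (cis t) * (complex_of_real (h (cis t)) - trig xs (cis t))) \<le> C * d"
        using C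
      proof eventually_elim
        case (elim t)
        have tx: "trig xs (cis t) = complex_of_real (p (cis t))" using xs[of "cis t"] by simp
        have "norm (complex_of_real (h (cis t)) - trig xs (cis t)) = norm (h (cis t) - p (cis t))"
          unfolding tx of_real_diff[symmetric] norm_of_real by simp
        also have "\<dots> \<le> d" using pa cs[of t] by (simp add: less_imp_le)
        finally have dd: "norm (complex_of_real (h (cis t)) - trig xs (cis t)) \<le> d" .
        show ?case unfolding norm_mult by (rule mult_mono[OF elim dd C0 norm_ge_zero])
      qed
    qed
    also have "\<dots> = 2 * pi * (C * d)" using measure_NN by simp
    also have "\<dots> \<le> e"
    proof -
      have "2 * pi * (C * d) = e * (C * (2*pi)) / (C * (2*pi) + 1)" unfolding d_def
        by (simp add: mult_ac)
      also have "\<dots> \<le> e"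
      proof -
        have "e * (C * (2*pi)) \<le> e * (C * (2*pi) + 1)" using e by (simp add: distrib_left)
        then show ?thesis by (subst pos_divide_le_eq[OF cp]) (simp add: mult.commute)
      qed
      finally show ?thesis .
    qed
    finally show ?thesis by simp
  qed
  then have "norm I \<le> 0" by (rule field_le_epsilon)
  then show ?thesis unfolding I_def by simp
qed

lemma meas_ind_open:
  assumes "open U"
  shows "(\<lambda>t. phi (cis t) * indicator U (cis t)) \<in> borel_measurable NN"
proof -
  have "open (cis -` U)" using assms by (intro open_vimage) (auto intro: continuous_intros)
  then have "cis -` U \<in> sets borel" by simp
  moreover have "(\<lambda>t. indicator U (cis t) :: complex) = indicator (cis -` U)"
    by (auto simp: fun_eq_iff indicator_def)
  ultimately have "(\<lambda>t. indicator U (cis t) :: complex) \<in> borel_measurable borel" by simp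
  then show ?thesis using BM_phi unfolding BM_def by (intro BM_meas_NN) auto
qed

lemma open_zero:
  assumes U: "open U" "0 \<notin> U"
  shows "integral\<^sup>L NN (\<lambda>t. phi (cis t) * indicator U (cis t)) = 0"
proof -
  obtain C where C0: "C \<ge> 0" and C: "AE t in NN. norm (phi (cis t)) \<le> C" using bound_phi by blast
  define hk where "hk k z = min 1 (real k * infdist z (- U))" for k :: nat and z
  have hc: "continuous_on (sphere 0 1) (hk k)" for k
    unfolding hk_def by (intro continuous_intros)
  have hk01: "0 \<le> hk k z \<and> hk k z \<le> 1" for k z
    unfolding hk_def by (simp add: infdist_nonneg)
  have lim: "(\<lambda>k. hk k z) \<longlonglongrightarrow> indicator U z" for z
  proof (cases "z \<in> U")
    case True
    have "infdist z (- U) > 0"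
      using True U by (intro infdist_pos_not_in_closed) auto
    then obtain k0 :: nat where k0: "1 / infdist z (- U) < k0" using reals_Archimedean2 by blast
    have "eventually (\<lambda>k. hk k z = 1) sequentially"
      unfolding eventually_sequentially
    proof (intro exI allI impI)
      fix k assume "k0 \<le> k"
      then have "1 / infdist z (- U) < real k" using k0 by linarith
      then have "1 \<le> real k * infdist z (- U)"
        using \<open>infdist z (- U) > 0\<close> by (simp add: divide_less_eq)
      then show "hk k z = 1" unfolding hk_def by simp
    qed
    then show ?thesis using True by (simp add: tendsto_eventually)
  next
    case False
    then have "hk k z = 0" for k unfolding hk_def by simp
    then show ?thesis using False by simp
  qed
  have mU: "(\<lambda>t. indicator U (cis t) :: complex) \<in> borel_measurable borel"
  proof -
    have "open (cis -` U)" using U(1) by (intro open_vimage) (auto intro: continuous_intros)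
    then have "cis -` U \<in> sets borel" by simp
    moreover have "(\<lambda>t. indicator U (cis t) :: complex) = indicator (cis -` U)"
      by (auto simp: fun_eq_iff indicator_def)
    ultimately show ?thesis by simp
  qed
  have "(\<lambda>k. integral\<^sup>L NN (\<lambda>t. phi (cis t) * complex_of_real (hk k (cis t)))) \<longlonglongrightarrow>
        integral\<^sup>L NN (\<lambda>t. phi (cis t) * indicator U (cis t))"
  proof (rule integral_dominated_convergence[where w="\<lambda>t. C"])
    show "(\<lambda>t. phi (cis t) * indicator U (cis t)) \<in> borel_measurable NN"
      using BM_phi mU unfolding BM_def by (intro BM_meas_NN) auto
    show "(\<lambda>t. phi (cis t) * complex_of_real (hk k (cis t))) \<in> borel_measurable NN" for k
    proof -
      have "continuous_on UNIV (\<lambda>t. hk k (cis t))"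
        by (rule continuous_on_compose2[OF hc]) (auto intro: continuous_intros)
      then have "(\<lambda>t. complex_of_real (hk k (cis t))) \<in> borel_measurable borel"
        by (intro borel_measurable_continuous_onI continuous_intros)
      then show ?thesis using BM_phi unfolding BM_def by (intro BM_meas_NN) auto
    qed
    show "integrable NN (\<lambda>t. C)" using finite_measure.integrable_const[OF fin_NN] .
    show "AE t in NN. (\<lambda>k. phi (cis t) * complex_of_real (hk k (cis t))) \<longlonglongrightarrow> phi (cis t) * indicator U (cis t)"
    proof (intro AE_I2 tendsto_mult tendsto_const)
      fix t
      have "(\<lambda>k. complex_of_real (hk k (cis t))) \<longlonglongrightarrow> complex_of_real (indicator U (cis t))"
        by (intro tendsto_of_real lim)
      then show "(\<lambda>k. complex_of_real (hk k (cis t))) \<longlonglongrightarrow> indicator U (cis t)"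
        by (cases "cis t \<in> U") (simp_all add: indicator_def)
    qed
    show "AE t in NN. norm (phi (cis t) * complex_of_real (hk k (cis t))) \<le> C" for k
      using C
    proof eventually_elim
      case (elim t)
      have "norm (phi (cis t) * complex_of_real (hk k (cis t))) = norm (phi (cis t)) * hk k (cis t)"
        using hk01[of k "cis t"] by (simp add: norm_mult)
      also have "\<dots> \<le> C * 1"
        using hk01[of k "cis t"] elim C0 by (intro mult_mono) auto
      finally show ?case by simp
    qed
  qed
  moreover have "integral\<^sup>L NN (\<lambda>t. phi (cis t) * complex_of_real (hk k (cis t))) = 0" for k
    by (rule cont_zero[OF hc])
  ultimately have "(\<lambda>k. 0) \<longlonglongrightarrow> integral\<^sup>L NN (\<lambda>t. phi (cis t) * indicator U (cis t))" by simp
  then have "0 = integral\<^sup>L NN (\<lambda>t. phi (cis t) * indicator U (cis t))" by (rule LIMSEQ_unique[OF tendsto_const])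
  then show ?thesis by simp
qed

lemma meas_ind_ioi: "(\<lambda>t. phi (cis t) * indicator {x<..} t) \<in> borel_measurable NN"
  using BM_phi unfolding BM_def by (intro BM_meas_NN) auto

lemma AE_pts: "AE t in NN. t \<noteq> 0 \<and> t \<noteq> pi \<and> t \<noteq> 2*pi"
  unfolding AE_NN using AE_lborel_singleton[of 0] AE_lborel_singleton[of pi] AE_lborel_singleton[of "2*pi"]
  by eventually_elim auto

lemma ioi_zero_NN: "integral\<^sup>L NN (\<lambda>t. phi (cis t) * indicator {x<..} t) = 0"
proof -
  consider "x < 0" | "2*pi \<le> x" | "0 \<le> x" "x < pi" | "pi \<le> x" "x < 2*pi" by linarith
  then show ?thesis
  proof cases
    case 1
    have "integral\<^sup>L NN (\<lambda>t. phi (cis t) * indicator {x<..} t) = integral\<^sup>L NN (\<lambda>t. phi (cis t) * indicator (- {0}) (cis t))"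
      using 1 by (intro Bochner_Integration.integral_cong refl) (auto simp: space_NN indicator_def)
    also have "\<dots> = 0" by (rule open_zero) auto
    finally show ?thesis .
  next
    case 2
    have "integral\<^sup>L NN (\<lambda>t. phi (cis t) * indicator {x<..} t) = integral\<^sup>L NN (\<lambda>t. 0)"
      using 2 by (intro Bochner_Integration.integral_cong refl) (auto simp: space_NN indicator_def)
    then show ?thesis by simp
  next
    case 3
    define U where "U = {z. Im z < 0} \<union> {z. 0 < Im z \<and> Re z < cos x}"
    have oU: "open U" unfolding U_def
      by (intro open_Un open_Collect_less open_Collect_conj continuous_intros)
    have "integral\<^sup>L NN (\<lambda>t. phi (cis t) * indicator {x<..} t) = integral\<^sup>L NN (\<lambda>t. phi (cis t) * indicator U (cis t))"
    proof (rule integral_cong_AE[OF meas_ind_ioi])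
      show "(\<lambda>t. phi (cis t) * indicator U (cis t)) \<in> borel_measurable NN"
        by (rule meas_ind_open[OF oU])
      show "AE t in NN. phi (cis t) * indicator {x<..} t = phi (cis t) * indicator U (cis t)"
        using AE_pts
      proof (rule AE_mp[OF _ AE_I2], intro impI)
        fix t assume t: "t \<in> space NN" and p: "t \<noteq> 0 \<and> t \<noteq> pi \<and> t \<noteq> 2*pi"
        have "(x < t) \<longleftrightarrow> cis t \<in> U"
        proof (cases "t < pi")
          case True
          then have "sin t > 0" using t p by (intro sin_gt_zero) (auto simp: space_NN)
          moreover have "cos t < cos x \<longleftrightarrow> x < t" using True 3 t by (intro cos_mono_less_eq) (auto simp: space_NN)
          ultimately show ?thesis unfolding U_def by auto
        next
          case False
          then have "sin t < 0" using t p by (intro sin_lt_zero) (auto simp: space_NN)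
          then show ?thesis unfolding U_def using False 3 by auto
        qed
        then show "phi (cis t) * indicator {x<..} t = phi (cis t) * indicator U (cis t)"
          by (simp add: indicator_def)
      qed
    qed
    also have "\<dots> = 0" by (rule open_zero[OF oU]) (simp add: U_def)
    finally show ?thesis .
  next
    case 4
    define U where "U = {z. Im z < 0 \<and> cos x < Re z}"
    have oU: "open U" unfolding U_def
      by (intro open_Collect_less open_Collect_conj continuous_intros)
    have "integral\<^sup>L NN (\<lambda>t. phi (cis t) * indicator {x<..} t) = integral\<^sup>L NN (\<lambda>t. phi (cis t) * indicator U (cis t))"
    proof (rule integral_cong_AE[OF meas_ind_ioi])
      show "(\<lambda>t. phi (cis t) * indicator U (cis t)) \<in> borel_measurable NN"
        by (rule meas_ind_open[OF oU])
      show "AE t in NN. phi (cis t) * indicator {x<..} t = phi (cis t) * indicator U (cis t)"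
        using AE_pts
      proof (rule AE_mp[OF _ AE_I2], intro impI)
        fix t assume t: "t \<in> space NN" and p: "t \<noteq> 0 \<and> t \<noteq> pi \<and> t \<noteq> 2*pi"
        have "(x < t) \<longleftrightarrow> cis t \<in> U"
        proof (cases "t < pi")
          case True
          then have "sin t > 0" using t p by (intro sin_gt_zero) (auto simp: space_NN)
          then show ?thesis unfolding U_def using True 4 by auto
        next
          case False
          then have "sin t < 0" using t p by (intro sin_lt_zero) (auto simp: space_NN)
          moreover have "cos (2*pi - x) < cos (2*pi - t) \<longleftrightarrow> 2*pi - t < 2*pi - x"
            using False 4 t by (intro cos_mono_less_eq) (auto simp: space_NN)
          ultimately show ?thesis unfolding U_def by auto
        qed
        then show "phi (cis t) * indicator {x<..} t = phi (cis t) * indicator U (cis t)"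
          by (simp add: indicator_def)
      qed
    qed
    also have "\<dots> = 0" by (rule open_zero[OF oU]) (simp add: U_def)
    finally show ?thesis .
  qed
qed

lemma BM_ind: "A \<in> sets borel \<Longrightarrow> BM (\<lambda>t. indicator A t)"
  unfolding BM_def by (auto intro!: exI[of _ 1] simp: indicator_def)

lemma ae_zero: "AE t in lborel. t \<in> {0..2*pi} \<longrightarrow> phi (cis t) = 0"
proof -
  have I: "{0..2*pi::real} \<inter> space lborel \<in> sets lborel" by simp
  have BMx: "BM (\<lambda>t. phi (cis t) * indicator {x<..} t)" for x
    by (intro BM_mult BM_phi BM_ind) simp
  have part: "AE t in lborel. indicator {0..2*pi} t * R (phi (cis t)) = 0"
    if R: "bounded_linear R" for R :: "complex \<Rightarrow> real"
  proof (rule ioi_zero)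
    have "integrable NN (\<lambda>t. R (phi (cis t)))"
      by (rule integrable_bounded_linear[OF R(1) BM_int[OF BM_phi]])
    then show "integrable lborel (\<lambda>t. indicator {0..2*pi} t * R (phi (cis t)))"
      unfolding NN_def integrable_restrict_space[OF I] by simp
    fix x :: real
    have "0 = R (integral\<^sup>L NN (\<lambda>t. phi (cis t) * indicator {x<..} t))"
      using ioi_zero_NN[of x] R(1) by (simp add: linear_simps(3) bounded_linear.linear)
    also have "\<dots> = integral\<^sup>L NN (\<lambda>t. R (phi (cis t) * indicator {x<..} t))"
      by (rule integral_bounded_linear[OF R(1) BM_int[OF BMx], symmetric])
    also have "\<dots> = integral\<^sup>L lborel (\<lambda>t. indicator {0..2*pi} t *\<^sub>R R (phi (cis t) * indicator {x<..} t))"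
      unfolding NN_def by (rule integral_restrict_space[OF I])
    also have "\<dots> = (LINT t:{x<..}|lborel. indicator {0..2*pi} t * R (phi (cis t)))"
      unfolding set_lebesgue_integral_def
      by (intro Bochner_Integration.integral_cong refl) (simp add: linear_0[OF bounded_linear.linear[OF R(1)]] indicator_def)
    finally show "(LINT t:{x<..}|lborel. indicator {0..2*pi} t * R (phi (cis t))) = 0" by simp
  qed
  have "AE t in lborel. indicator {0..2*pi} t * Re (phi (cis t)) = 0"
    by (rule part) (rule bounded_linear_Re)
  moreover have "AE t in lborel. indicator {0..2*pi} t * Im (phi (cis t)) = 0"
    by (rule part) (rule bounded_linear_Im)
  ultimately show ?thesis
    by eventually_elim (auto simp: complex_eq_iff)
qed

end
end

theorem mainTheorem11:
  fixes phi :: "complex \<Rightarrow> complex"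
  assumes "Linf phi"
  shows "selfadjoint_on_H2 (slant_HT phi) \<longleftrightarrow>
         (AE t in lborel. t \<in> {0..2*pi} \<longrightarrow> phi (cis t) = 0)"
proof
  assume SA: "selfadjoint_on_H2 (slant_HT phi)"
  have Z: "fourier phi x = 0" for x
  proof (rule ccontr)
    assume nz: "fourier phi x \<noteq> 0"
    obtain C where C0: "C \<ge> 0" and C: "AE t in NN. norm (phi (cis t)) \<le> C"
      using bound_phi[OF assms] by blast
    define c where "c = (cmod (fourier phi x))\<^sup>2"
    have c: "c > 0" unfolding c_def using nz by simp
    obtain N :: nat where N: "C\<^sup>2 / c < real N" using reals_Archimedean2 by blast
    define m0 where "m0 = max 0 x"
    define g where "g k = 15 * (m0 + int k) - 4 * x" for k :: nat
    define S where "S = g ` {..<N}"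
    have inj: "inj_on g {..<N}" unfolding g_def inj_on_def by auto
    have cardS: "card S = N" unfolding S_def using card_image[OF inj] by simp
    have val: "(cmod (fourier phi n))\<^sup>2 = c" if nS: "n \<in> S" for n
    proof -
      obtain k where n: "n = g k" using nS unfolding S_def by blast
      have "norm (fourier phi (15 * (m0 + int k) - 4 * x)) = norm (fourier phi x)"
        by (rule norm_rel[OF SA]) (auto simp: m0_def)
      then show ?thesis unfolding n g_def c_def by simp
    qed
    have "(\<Sum>n\<in>S. (cmod (fourier phi n))\<^sup>2) = real N * c"
      using val cardS by simp
    moreover have "(\<Sum>n\<in>S. (cmod (fourier phi n))\<^sup>2) \<le> C\<^sup>2"
      by (rule bessel[OF assms _ C]) (simp add: S_def)
    moreover have "C\<^sup>2 < real N * c" using N c by (simp add: divide_less_eq)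
    ultimately show False by simp
  qed
  then show "AE t in lborel. t \<in> {0..2*pi} \<longrightarrow> phi (cis t) = 0"
    using ae_zero[OF assms] by blast
next
  assume AE: "AE t in lborel. t \<in> {0..2*pi} \<longrightarrow> phi (cis t) = 0"
  have Z: "fourier phi n = 0" for n
  proof -
    have B: "BM (\<lambda>t. phi (cis t) * cnj (cis t powi n))"
      by (intro BM_mult BM_phi[OF assms] BM_cnj BM_cispow)
    have "integral\<^sup>L NN (\<lambda>t. phi (cis t) * cnj (cis t powi n)) = integral\<^sup>L NN (\<lambda>t. 0)"
    proof (rule integral_cong_AE)
      show "(\<lambda>t. phi (cis t) * cnj (cis t powi n)) \<in> borel_measurable NN"
        using B unfolding BM_def by (intro BM_meas_NN) auto
      show "(\<lambda>t. 0::complex) \<in> borel_measurable NN" by simp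
      show "AE t in NN. phi (cis t) * cnj (cis t powi n) = 0"
        unfolding AE_NN using AE by eventually_elim auto
    qed
    then show ?thesis unfolding fourier_def LINT_NN by simp
  qed
  have T: "slant_HT phi f = (\<lambda>_. 0)" for f
    unfolding slant_HT_def Mult_def Z Wop_def Proj_def by (simp add: fun_eq_iff)
  show "selfadjoint_on_H2 (slant_HT phi)"
    unfolding selfadjoint_on_H2_def l2_inner_def T by simp
qed

end
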